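(* Let $t$ be a positive rational number and let $G$ be a minimally $t$-tough split graph whose vertex set is partitioned into a clique $C$ and an independent set $I$. Let $e=uv$ be an edge with $u,v\in C$, and let $S\subseteq V(G)$ be a witness set for $e$ (in the sense defined in the context). Then \[ S=\big(C\setminus\{u,v\}\big)\cup\{w\in I \mid uw\in E(G),\ vw\in E(G)\}. \]
   Context: All graphs are finite, simple and undirected. A graph is split if its vertex set can be partitioned into a clique and an independent set. $\omega(H)$ denotes the number of components of $H$. A cutset of $G$ is a vertex set $S$ with $G-S$ disconnected. For positive real $t$, $G$ is $t$-tough if $\omega(G-S)\le |S|/t$ for every cutset $S$; the toughness $\tau(G)$ is the largest such $t$, with $\tau(K_n)=\infty$ for all $n\ge1$. $G$ is minimally $t$-tough if $\tau(G)=t$ and $\tau(G-e)<t$ for every edge $e$. For a minimally $t$-tough graph $G$ and an edge $e$, a witness set for $e$ is a set $S\subseteq V(G)$ such that either $e$ is a bridge of $G$ and $S=\emptyset$, or $e$ is not a bridge of $G$, $\omega(G-S)\le |S|/t$, $\omega((G-e)-S)>|S|/t$, and $e$ is a bridge in $G-S$. (For every edge of a minimally $t$-tough graph a witness set exists.) *)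

theory Defs
  imports Complex_Main
begin

definition graph :: "'a set \<Rightarrow> ('a \<Rightarrow> 'a \<Rightarrow> bool) \<Rightarrow> bool" where
  "graph V E \<longleftrightarrow> finite V \<and> (\<forall>x y. E x y \<longrightarrow> E y x) \<and> (\<forall>x. \<not> E x x)
     \<and> (\<forall>x y. E x y \<longrightarrow> x \<in> V \<and> y \<in> V)"

definition conn :: "'a set \<Rightarrow> ('a \<Rightarrow> 'a \<Rightarrow> bool) \<Rightarrow> 'a rel" where
  "conn W E = {(x, y). x \<in> W \<and> y \<in> W \<and> (\<lambda>a b. a \<in> W \<and> b \<in> W \<and> E a b)\<^sup>*\<^sup>* x y}"

definition ncomp :: "'a set \<Rightarrow> ('a \<Rightarrow> 'a \<Rightarrow> bool) \<Rightarrow> nat" where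
  "ncomp W E = card (W // conn W E)"

definition del_edge :: "('a \<Rightarrow> 'a \<Rightarrow> bool) \<Rightarrow> 'a \<Rightarrow> 'a \<Rightarrow> ('a \<Rightarrow> 'a \<Rightarrow> bool)" where
  "del_edge E u v = (\<lambda>x y. E x y \<and> {x, y} \<noteq> {u, v})"

definition cutset :: "'a set \<Rightarrow> ('a \<Rightarrow> 'a \<Rightarrow> bool) \<Rightarrow> 'a set \<Rightarrow> bool" where
  "cutset V E S \<longleftrightarrow> S \<subseteq> V \<and> ncomp (V - S) E > 1"

definition tough :: "'a set \<Rightarrow> ('a \<Rightarrow> 'a \<Rightarrow> bool) \<Rightarrow> real \<Rightarrow> bool" where
  "tough V E t \<longleftrightarrow> (\<forall>S. cutset V E S \<longrightarrow> real (ncomp (V - S) E) \<le> real (card S) / t)"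

text \<open>tau(G) = t (t a positive real): G is t-tough but not t'-tough for any t' > t.
  (This excludes complete graphs, whose toughness is infinite.)\<close>
definition toughness_eq :: "'a set \<Rightarrow> ('a \<Rightarrow> 'a \<Rightarrow> bool) \<Rightarrow> real \<Rightarrow> bool" where
  "toughness_eq V E t \<longleftrightarrow> tough V E t \<and> (\<forall>t'. t' > t \<longrightarrow> \<not> tough V E t')"

text \<open>tau(G - e) < t, for positive t, is equivalent to G - e not being t-tough.\<close>
definition minimally_tough :: "'a set \<Rightarrow> ('a \<Rightarrow> 'a \<Rightarrow> bool) \<Rightarrow> real \<Rightarrow> bool" where
  "minimally_tough V E t \<longleftrightarrow> toughness_eq V E t \<and>
     (\<forall>x y. E x y \<longrightarrow> \<not> tough V (del_edge E x y) t)"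

definition is_bridge :: "'a set \<Rightarrow> ('a \<Rightarrow> 'a \<Rightarrow> bool) \<Rightarrow> 'a \<Rightarrow> 'a \<Rightarrow> bool" where
  "is_bridge V E u v \<longleftrightarrow> u \<in> V \<and> v \<in> V \<and> E u v \<and> ncomp V (del_edge E u v) > ncomp V E"

definition witness_set :: "'a set \<Rightarrow> ('a \<Rightarrow> 'a \<Rightarrow> bool) \<Rightarrow> real \<Rightarrow> 'a \<Rightarrow> 'a \<Rightarrow> 'a set \<Rightarrow> bool" where
  "witness_set V E t u v S \<longleftrightarrow> S \<subseteq> V \<and>
     ((is_bridge V E u v \<and> S = {}) \<or>
      (\<not> is_bridge V E u v \<and>
       real (ncomp (V - S) E) \<le> real (card S) / t \<and>
       real (ncomp (V - S) (del_edge E u v)) > real (card S) / t \<and>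
       is_bridge (V - S) E u v))"

definition split_partition :: "'a set \<Rightarrow> ('a \<Rightarrow> 'a \<Rightarrow> bool) \<Rightarrow> 'a set \<Rightarrow> 'a set \<Rightarrow> bool" where
  "split_partition V E C I \<longleftrightarrow> C \<union> I = V \<and> C \<inter> I = {} \<and>
     (\<forall>x\<in>C. \<forall>y\<in>C. x \<noteq> y \<longrightarrow> E x y) \<and> (\<forall>x\<in>I. \<forall>y\<in>I. \<not> E x y)"

end

theory Submission
  imports Defs
begin

lemma sym_rtranclp_gen:
  assumes "\<And>x y. P x y \<Longrightarrow> P y x" and "P\<^sup>*\<^sup>* x y" shows "P\<^sup>*\<^sup>* y x"
  using assms(2)
proof induction
  case base then show ?case by simp
next
  case (step y z) then show ?case using assms(1) by (meson converse_rtranclp_into_rtranclp)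
qed

lemma conn_equiv:
  assumes "\<And>x y. E x y \<Longrightarrow> E y x"
  shows "equiv W (conn W E)"
proof -
  let ?P = "\<lambda>a b. a \<in> W \<and> b \<in> W \<and> E a b"
  have s: "\<And>x y. ?P x y \<Longrightarrow> ?P y x" using assms by blast
  show ?thesis
  proof (rule equivI)
    show "conn W E \<subseteq> W \<times> W" unfolding conn_def by auto
    show "refl_on W (conn W E)" by (rule refl_onI) (auto simp: conn_def)
    show "sym (conn W E)"
    proof (rule symI)
      fix x y assume "(x,y) \<in> conn W E"
      then have h: "x \<in> W" "y \<in> W" "?P\<^sup>*\<^sup>* x y" by (auto simp: conn_def)
      have "?P\<^sup>*\<^sup>* y x" by (rule sym_rtranclp_gen[of ?P]) (use h assms in auto)
      then show "(y,x) \<in> conn W E" using h by (simp add: conn_def)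
    qed
    show "trans (conn W E)"
    proof (rule transI)
      fix x y z assume "(x,y) \<in> conn W E" "(y,z) \<in> conn W E"
      then show "(x,z) \<in> conn W E" unfolding conn_def using rtranclp_trans[of ?P x y z] by blast
    qed
  qed
qed

lemma card_le_ncomp:
  assumes "equiv W R" "finite W" "Q \<subseteq> W" "\<And>a b. a \<in> Q \<Longrightarrow> b \<in> Q \<Longrightarrow> (a,b) \<in> R \<Longrightarrow> a = b"
  shows "card Q \<le> card (W // R)"
proof (rule card_inj_on_le[where f="\<lambda>a. R``{a}"])
  show "inj_on (\<lambda>a. R``{a}) Q"
  proof (rule inj_onI)
    fix a b assume "a \<in> Q" "b \<in> Q" "R``{a} = R``{b}"
    moreover have "a \<in> W" "b \<in> W" using \<open>a\<in>Q\<close> \<open>b\<in>Q\<close> assms(3) by auto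
    ultimately have "(a,b) \<in> R" using eq_equiv_class_iff[OF assms(1), of a b] by simp
    then show "a = b" using assms(4) \<open>a\<in>Q\<close> \<open>b\<in>Q\<close> by blast
  qed
  show "(\<lambda>a. R``{a}) ` Q \<subseteq> W // R"
  proof
    fix K assume "K \<in> (\<lambda>a. R``{a}) ` Q"
    then obtain a where "a \<in> Q" "K = R``{a}" by blast
    then show "K \<in> W // R" using assms(3) quotientI[of a W R] by auto
  qed
  show "finite (W // R)" using assms(1,2) finite_quotient[of W R] unfolding equiv_def by simp
qed

lemma reps_exist:
  assumes "equiv W R" "finite W" "a \<in> W"
  shows "\<exists>Q. Q \<subseteq> W \<and> a \<in> Q \<and> (\<forall>p\<in>Q. \<forall>q\<in>Q. (p,q) \<in> R \<longrightarrow> p = q) \<and> card Q = card (W // R)"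
proof -
  define f where "f K = (if a \<in> K then a else (SOME y. y \<in> K))" for K
  have fK: "f K \<in> K" if "K \<in> W // R" for K
  proof -
    have "K \<noteq> {}" using in_quotient_imp_non_empty[OF assms(1) that] .
    then have "\<exists>y. y \<in> K" by blast
    then show ?thesis unfolding f_def by (auto intro: someI_ex)
  qed
  have disj: "K = K'" if "K \<in> W//R" "K' \<in> W//R" "y \<in> K" "y \<in> K'" for K K' y
    using quotient_disj[OF assms(1) that(1,2)] that(3,4) by blast
  have inj: "inj_on f (W // R)"
    by (rule inj_onI) (metis fK disj)
  define Q where "Q = f ` (W // R)"
  have "Q \<subseteq> W" using fK in_quotient_imp_subset[OF assms(1)] unfolding Q_def by blast
  moreover have "a \<in> Q"
  proof -
    have "R``{a} \<in> W // R" using assms(3) by (rule quotientI)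
    moreover have "a \<in> R``{a}" using equiv_class_self[OF assms(1,3)] .
    ultimately show ?thesis unfolding Q_def f_def by force
  qed
  moreover have "\<forall>p\<in>Q. \<forall>q\<in>Q. (p,q) \<in> R \<longrightarrow> p = q"
  proof (intro ballI impI)
    fix p q assume "p \<in> Q" "q \<in> Q" "(p,q) \<in> R"
    then obtain K K' where K: "K \<in> W//R" "K' \<in> W//R" "p = f K" "q = f K'" unfolding Q_def by blast
    have "q \<in> K" using in_quotient_imp_closed[OF assms(1) K(1) _ \<open>(p,q)\<in>R\<close>] fK K by blast
    then have "K = K'" using disj K fK by blast
    then show "p = q" using K by simp
  qed
  moreover have "card Q = card (W // R)" unfolding Q_def using card_image[OF inj] .
  ultimately show ?thesis by blast
qed

lemma del_sym:
  assumes "\<And>x y. E x y \<Longrightarrow> E y x"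
  shows "\<And>x y. del_edge E u v x y \<Longrightarrow> del_edge E u v y x"
  using assms unfolding del_edge_def by (auto simp: insert_commute)

lemma conn_del_eq:
  assumes sym: "\<And>x y. E x y \<Longrightarrow> E y x"
    and uv: "(u,v) \<in> conn W (del_edge E u v)"
  shows "conn W (del_edge E u v) = conn W E"
proof
  have le: "(\<lambda>a b. a \<in> W \<and> b \<in> W \<and> del_edge E u v a b) \<le> (\<lambda>a b. a \<in> W \<and> b \<in> W \<and> E a b)"
    by (auto simp: del_edge_def)
  show "conn W (del_edge E u v) \<subseteq> conn W E"
    unfolding conn_def using rtranclp_mono[OF le] by (auto dest: predicate2D)
  have eqv: "equiv W (conn W (del_edge E u v))"
    by (rule conn_equiv) (rule del_sym[OF sym])
  show "conn W E \<subseteq> conn W (del_edge E u v)"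
  proof
    fix p assume "p \<in> conn W E"
    then obtain x y where p: "p = (x,y)" "x \<in> W" "y \<in> W"
      and path: "(\<lambda>a b. a \<in> W \<and> b \<in> W \<and> E a b)\<^sup>*\<^sup>* x y"
      unfolding conn_def by auto
    from path have "(x,y) \<in> conn W (del_edge E u v)"
    proof induction
      case base then show ?case using p(2) unfolding conn_def by auto
    next
      case (step y z)
      have "(y,z) \<in> conn W (del_edge E u v)"
      proof (cases "{y,z} = {u,v}")
        case True
        then have "(y = u \<and> z = v) \<or> (y = v \<and> z = u)" by (auto simp: doubleton_eq_iff)
        then show ?thesis using uv eqv unfolding equiv_def sym_def by blast
      next
        case False
        then show ?thesis using step(2) unfolding conn_def del_edge_def by auto
      qed
      then show ?case using step(3) eqv unfolding equiv_def trans_def by blast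
    qed
    then show "p \<in> conn W (del_edge E u v)" using p by simp
  qed
qed

lemma core:
  assumes g: "graph V E" and sp: "split_partition V E C I" and tg: "tough V E t" and tpos: "t > 0"
    and a: "a \<in> C" and b: "b \<in> C" and ab: "a \<noteq> b"
    and SV: "S \<subseteq> V" and aS: "a \<notin> S" and bS: "b \<notin> S" and CS: "C - {a,b} \<subseteq> S"
    and xS: "x \<in> S" and xI: "x \<in> I" and nbx: "\<not> E b x"
    and big: "real (ncomp (V - S) (del_edge E a b)) > real (card S) / t"
  shows False
proof -
  have fin: "finite V" and sym: "\<And>p q. E p q \<Longrightarrow> E q p" and irr: "\<And>p. \<not> E p p"
    using g unfolding graph_def by blast+
  have CI: "C \<union> I = V" "C \<inter> I = {}" and Iind: "\<And>p q. p \<in> I \<Longrightarrow> q \<in> I \<Longrightarrow> \<not> E p q"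
    using sp unfolding split_partition_def by blast+
  define T where "T = insert a (S - {x})"
  have xa: "x \<noteq> a" using xS aS by blast
  have xb: "x \<noteq> b" using xI b CI by blast
  have finS: "finite S" using SV fin finite_subset by blast
  have cardT: "card T = card S" unfolding T_def using finS xS aS
    by (simp add: card_insert_if card_Diff_singleton card_gt_0_iff)
      (metis Suc_pred card_gt_0_iff empty_iff finS)
  have TV: "T \<subseteq> V" unfolding T_def using a CI SV by blast
  have xV: "x \<in> V" using xS SV by blast
  have iso: "\<not> E x y" if "y \<in> V - T" for y
  proof
    assume exy: "E x y"
    then have "y \<notin> I" using Iind xI by blast
    then have yC: "y \<in> C" using that CI by blast
    have "y \<noteq> x" using irr exy by blast
    then have yS: "y \<notin> S" using that unfolding T_def by blast
    have "y \<noteq> a" using that unfolding T_def by blast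
    then have "y = b" using CS yC yS by blast
    then show False using nbx sym exy by blast
  qed
  let ?P2 = "\<lambda>p q. p \<in> V - T \<and> q \<in> V - T \<and> E p q"
  let ?P1 = "\<lambda>p q. p \<in> V - S \<and> q \<in> V - S \<and> del_edge E a b p q"
  have xconn: "y = x" if "?P2\<^sup>*\<^sup>* x y" for y
    using that by induction (use iso in blast)+
  have trans12: "?P1\<^sup>*\<^sup>* p q \<and> q \<noteq> x" if "?P2\<^sup>*\<^sup>* p q" "p \<in> V - T" "p \<noteq> x" for p q
    using that(1)
  proof induction
    case base then show ?case using that(3) by simp
  next
    case (step q r)
    have qx: "q \<noteq> x" using step.IH by blast
    have rx: "r \<noteq> x" using step.hyps(2) iso sym by blast
    have q1: "q \<notin> S" "q \<noteq> a" using step.hyps(2) qx unfolding T_def by auto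
    have r1: "r \<notin> S" "r \<noteq> a" using step.hyps(2) rx unfolding T_def by auto
    have "{q,r} \<noteq> {a,b}" using q1 r1 by (auto simp: doubleton_eq_iff)
    then have "?P1 q r" using step.hyps(2) q1 r1 unfolding del_edge_def by auto
    moreover have "?P1\<^sup>*\<^sup>* p q" using step.IH by blast
    ultimately have "?P1\<^sup>*\<^sup>* p r" by (rule rtranclp.rtrancl_into_rtrancl[rotated])
    then show ?case using rx by blast
  qed
  have eq1: "equiv (V - S) (conn (V - S) (del_edge E a b))"
    by (rule conn_equiv) (rule del_sym[OF sym])
  have eq2: "equiv (V - T) (conn (V - T) E)"
    by (rule conn_equiv) (rule sym)
  have aW: "a \<in> V - S" using a CI aS by blast
  obtain Q where Q: "Q \<subseteq> V - S" "a \<in> Q"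
    "\<forall>p\<in>Q. \<forall>q\<in>Q. (p,q) \<in> conn (V - S) (del_edge E a b) \<longrightarrow> p = q"
    "card Q = card ((V - S) // conn (V - S) (del_edge E a b))"
    using reps_exist[OF eq1 _ aW] fin by blast
  define Q' where "Q' = insert x (Q - {a})"
  have finQ: "finite Q" using Q(1) fin finite_subset by blast
  have xQ: "x \<notin> Q" using Q(1) xS by blast
  have cQ: "card Q' = card Q" unfolding Q'_def using finQ xQ Q(2)
    by (simp add: card_Diff_singleton) (metis Suc_pred card_gt_0_iff empty_iff finQ)
  have Q'W: "Q' \<subseteq> V - T" unfolding Q'_def T_def using Q(1) xV xa by blast
  have pw: "p = q" if "p \<in> Q'" "q \<in> Q'" "(p,q) \<in> conn (V - T) E" for p q
  proof -
    have sym2: "(q,p) \<in> conn (V - T) E" using that(3) eq2 unfolding equiv_def sym_def by blast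
    show ?thesis
    proof (cases "p = x \<or> q = x")
      case True
      then show ?thesis using xconn that(3) sym2 unfolding conn_def by auto
    next
      case False
      then have pq: "p \<in> Q - {a}" "q \<in> Q - {a}" using that(1,2) unfolding Q'_def by auto
      have "?P2\<^sup>*\<^sup>* p q" "p \<in> V - T" using that(3) unfolding conn_def by auto
      then have "?P1\<^sup>*\<^sup>* p q" using trans12 False by blast
      then have "(p,q) \<in> conn (V - S) (del_edge E a b)" using pq Q(1) unfolding conn_def by auto
      then show ?thesis using Q(3) pq by blast
    qed
  qed
  have le1: "card Q' \<le> ncomp (V - T) E" unfolding ncomp_def
    by (rule card_le_ncomp[OF eq2 _ Q'W pw]) (use fin in auto)
  have bW: "b \<in> V - T" using b CI bS ab unfolding T_def by blast
  have xW: "x \<in> V - T" using Q'W unfolding Q'_def by blast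
  have pw2: "p = q" if "p \<in> {x,b}" "q \<in> {x,b}" "(p,q) \<in> conn (V - T) E" for p q
  proof -
    have sym2: "(q,p) \<in> conn (V - T) E" using that(3) eq2 unfolding equiv_def sym_def by blast
    show ?thesis using that xconn sym2 unfolding conn_def by auto
  qed
  have "card {x,b} \<le> ncomp (V - T) E" unfolding ncomp_def
    by (rule card_le_ncomp[OF eq2 _ _ pw2]) (use fin xW bW in auto)
  then have "ncomp (V - T) E > 1" using xb by simp
  then have "cutset V E T" using TV unfolding cutset_def by simp
  then have "real (ncomp (V - T) E) \<le> real (card T) / t" using tg unfolding tough_def by blast
  moreover have "ncomp (V - S) (del_edge E a b) \<le> ncomp (V - T) E"
    using le1 cQ Q(4) unfolding ncomp_def by simp
  ultimately show False using big cardT by simp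
qed

theorem mainTheorem4:
  fixes V :: "'a set" and E :: "'a \<Rightarrow> 'a \<Rightarrow> bool" and t :: real
    and C I S :: "'a set" and u v :: 'a
  assumes "graph V E"
    and "t \<in> \<rat>" and "t > 0"
    and "minimally_tough V E t"
    and "split_partition V E C I"
    and "u \<in> C" and "v \<in> C" and "E u v"
    and "witness_set V E t u v S"
  shows "S = (C - {u, v}) \<union> {w \<in> I. E u w \<and> E v w}"
proof -
  have sym: "\<And>p q. E p q \<Longrightarrow> E q p" and irr: "\<And>p. \<not> E p p"
    using assms(1) unfolding graph_def by blast+
  have CI: "C \<union> I = V" "C \<inter> I = {}" and Ccl: "\<And>p q. p \<in> C \<Longrightarrow> q \<in> C \<Longrightarrow> p \<noteq> q \<Longrightarrow> E p q"
    using assms(5) unfolding split_partition_def by blast+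
  have tg: "tough V E t" using assms(4) unfolding minimally_tough_def toughness_eq_def by blast
  have uv: "u \<noteq> v" using assms(8) irr by blast
  have SV: "S \<subseteq> V" using assms(9) unfolding witness_set_def by blast
  have br: "is_bridge (V - S) E u v" using assms(9) unfolding witness_set_def by auto
  then have uS: "u \<in> V - S" "v \<in> V - S" unfolding is_bridge_def by auto
  have sub1: "(C - {u, v}) \<union> {w \<in> I. E u w \<and> E v w} \<subseteq> S"
  proof
    fix w assume w: "w \<in> (C - {u, v}) \<union> {w \<in> I. E u w \<and> E v w}"
    show "w \<in> S"
    proof (rule ccontr)
      assume wS: "w \<notin> S"
      have wne: "w \<noteq> u" "w \<noteq> v" using w CI assms(6,7) by auto
      have e: "E u w" "E w v" using w Ccl assms(6,7) wne sym by auto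
      have wV: "w \<in> V" using w CI by auto
      let ?P = "\<lambda>a b. a \<in> V - S \<and> b \<in> V - S \<and> del_edge E u v a b"
      have p1: "?P u w" "?P w v" using e wne uS wV wS unfolding del_edge_def
        by (auto simp: doubleton_eq_iff)
      have "?P\<^sup>*\<^sup>* w v" using p1(2) by (rule r_into_rtranclp)
      then have "?P\<^sup>*\<^sup>* u v" using p1(1) by (rule converse_rtranclp_into_rtranclp[rotated])
      then have "(u,v) \<in> conn (V - S) (del_edge E u v)" using uS unfolding conn_def by auto
      then have "conn (V - S) (del_edge E u v) = conn (V - S) E" using conn_del_eq sym by metis
      then show False using br unfolding is_bridge_def ncomp_def by simp
    qed
  qed
  have sub2: "S \<subseteq> (C - {u, v}) \<union> {w \<in> I. E u w \<and> E v w}"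
  proof
    fix x assume xS: "x \<in> S"
    then have nb: "\<not> is_bridge V E u v" and
      big: "real (ncomp (V - S) (del_edge E u v)) > real (card S) / t"
      using assms(9) unfolding witness_set_def by auto
    show "x \<in> (C - {u, v}) \<union> {w \<in> I. E u w \<and> E v w}"
    proof (rule ccontr)
      assume nx: "x \<notin> (C - {u, v}) \<union> {w \<in> I. E u w \<and> E v w}"
      have "x \<noteq> u" "x \<noteq> v" using xS uS by auto
      then have xI: "x \<in> I" using nx xS SV CI by auto
      have CS: "C - {u,v} \<subseteq> S" using sub1 by blast
      have "\<not> E v x \<or> \<not> E u x" using nx xI by auto
      then show False
      proof
        assume "\<not> E v x"
        then show False using core[OF assms(1,5) tg assms(3) assms(6,7) uv SV _ _ CS xS xI _ big]
          uS by blast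
      next
        assume "\<not> E u x"
        moreover have "del_edge E v u = del_edge E u v" unfolding del_edge_def
          by (simp add: insert_commute)
        moreover have "C - {v,u} \<subseteq> S" using CS by blast
        ultimately show False using core[OF assms(1,5) tg assms(3) assms(7,6) uv[symmetric] SV, of x]
          uS xS xI big by auto
      qed
    qed
  qed
  show ?thesis using sub1 sub2 by blast
qed

end
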